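(* Let $(X,d,\theta)$ be a $\theta$-metric space, where $\theta$ is a $B$-action. Then the topological space $(X,\tau_d)$ is metrizable, i.e. there is a metric on $X$ whose metric topology equals $\tau_d$.
   Context: A $B$-action is a map $\theta:[0,\infty)\times[0,\infty)\to[0,\infty)$ that is continuous in each variable separately and satisfies: (i) $\theta(0,0)=0$ and $\theta(s,t)=\theta(t,s)$ for all $s,t\ge0$; (ii) $\theta(x,y)<\theta(s,t)$ whenever either $x\le s,\ y<t$ or $x<s,\ y\le t$; (iii) for each $m\in\mathrm{Im}(\theta)=\{\theta(s,t):s,t\ge0\}$ and each $t\in[0,m]$ there is $s\in[0,m]$ with $\theta(s,t)=m$; (iv) $\theta(s,0)\le s$ for all $s>0$. A $\theta$-metric on a non-empty set $X$ with respect to a $B$-action $\theta$ is a map $d:X\times X\to[0,\infty)$ such that for all $x,y,z\in X$: $d(x,y)=0$ iff $x=y$; $d(x,y)=d(y,x)$; $d(x,z)\le\theta(d(x,y),d(y,z))$. The topology $\tau_d$ consists of all $U\subseteq X$ such that for every $x\in U$ there is $r>0$ with $\{y\in X: d(x,y)<r\}\subseteq U$. *)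

theory Defs
  imports "HOL-Analysis.Analysis"
begin

definition B_action :: "(real \<Rightarrow> real \<Rightarrow> real) \<Rightarrow> bool" where
  "B_action \<theta> \<longleftrightarrow>
     (\<forall>s\<ge>0. \<forall>t\<ge>0. \<theta> s t \<ge> 0) \<and>
     (\<forall>t\<ge>0. continuous_on {0..} (\<lambda>s. \<theta> s t)) \<and>
     (\<forall>s\<ge>0. continuous_on {0..} (\<lambda>t. \<theta> s t)) \<and>
     \<theta> 0 0 = 0 \<and>
     (\<forall>s\<ge>0. \<forall>t\<ge>0. \<theta> s t = \<theta> t s) \<and>
     (\<forall>x\<ge>0. \<forall>y\<ge>0. \<forall>s\<ge>0. \<forall>t\<ge>0.
        ((x \<le> s \<and> y < t) \<or> (x < s \<and> y \<le> t)) \<longrightarrow> \<theta> x y < \<theta> s t) \<and>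
     (\<forall>m \<in> {\<theta> s t | s t. s \<ge> 0 \<and> t \<ge> 0}. \<forall>t\<in>{0..m}. \<exists>s\<in>{0..m}. \<theta> s t = m) \<and>
     (\<forall>s>0. \<theta> s 0 \<le> s)"

definition theta_metric :: "'a set \<Rightarrow> (real \<Rightarrow> real \<Rightarrow> real) \<Rightarrow> ('a \<Rightarrow> 'a \<Rightarrow> real) \<Rightarrow> bool" where
  "theta_metric X \<theta> d \<longleftrightarrow>
     (\<forall>x\<in>X. \<forall>y\<in>X. d x y \<ge> 0) \<and>
     (\<forall>x\<in>X. \<forall>y\<in>X. d x y = 0 \<longleftrightarrow> x = y) \<and>
     (\<forall>x\<in>X. \<forall>y\<in>X. d x y = d y x) \<and>
     (\<forall>x\<in>X. \<forall>y\<in>X. \<forall>z\<in>X. d x z \<le> \<theta> (d x y) (d y z))"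

definition theta_topology :: "'a set \<Rightarrow> ('a \<Rightarrow> 'a \<Rightarrow> real) \<Rightarrow> 'a topology" where
  "theta_topology X d = topology (\<lambda>U. U \<subseteq> X \<and>
     (\<forall>x\<in>U. \<exists>r>0. {y\<in>X. d x y < r} \<subseteq> U))"

end

theory Submission
  imports Defs
begin

lemma B_mono1:
  assumes "B_action \<theta>" "0 \<le> a" "a \<le> b" "0 \<le> t"
  shows "\<theta> a t \<le> \<theta> b t"
proof (cases "a = b")
  case False
  then have "a < b" using assms by simp
  have "\<forall>x\<ge>0. \<forall>y\<ge>0. \<forall>s\<ge>0. \<forall>t\<ge>0. ((x \<le> s \<and> y < t) \<or> (x < s \<and> y \<le> t)) \<longrightarrow> \<theta> x y < \<theta> s t"
    using assms(1) unfolding B_action_def by blast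
  then have "\<theta> a t < \<theta> b t" using \<open>a < b\<close> assms(2-4) by auto
  then show ?thesis by simp
qed simp

lemma B_zero_le:
  assumes "B_action \<theta>" "0 \<le> t"
  shows "\<theta> 0 t \<le> t"
proof (cases "t = 0")
  case True
  then show ?thesis using assms unfolding B_action_def by simp
next
  case False
  then have "t > 0" using assms by simp
  have "\<forall>s>0. \<theta> s 0 \<le> s" "\<forall>s\<ge>0. \<forall>t\<ge>0. \<theta> s t = \<theta> t s"
    using assms(1) unfolding B_action_def by blast+
  then show ?thesis using \<open>t > 0\<close> by force
qed

lemma B_cont1:
  assumes "B_action \<theta>" "0 \<le> t"
  shows "continuous_on {0..} (\<lambda>s. \<theta> s t)"
  using assms(1) unfolding B_action_def apply (elim conjE) using assms(2) by blast

lemma B_cont2: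
  assumes "B_action \<theta>" "0 \<le> s"
  shows "continuous_on {0..} (\<lambda>t. \<theta> s t)"
  using assms(1) unfolding B_action_def apply (elim conjE) using assms(2) by blast

lemma B_local:
  assumes B: "B_action \<theta>" and e: "e > 0" and t: "0 \<le> t"
  shows "\<exists>D>0. \<exists>E>0. \<forall>s\<ge>0. \<bar>s - t\<bar> < E \<longrightarrow> \<theta> D s < s + e"
proof -
  have c1: "continuous_on {0..} (\<lambda>s. \<theta> s t)" using B_cont1[OF B t] .
  have "\<exists>d>0. \<forall>s\<in>{0..}. dist s 0 < d \<longrightarrow> dist (\<theta> s t) (\<theta> 0 t) < e/2"
    by (rule c1[unfolded continuous_on_iff, rule_format]) (use e in auto)
  then obtain d where d: "d > 0" "\<forall>s\<in>{0..}. dist s 0 < d \<longrightarrow> dist (\<theta> s t) (\<theta> 0 t) < e/2"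
    by blast
  define D where "D = d/2"
  have "dist (\<theta> D t) (\<theta> 0 t) < e/2" using d D_def by auto
  then have "\<theta> D t - \<theta> 0 t < e/2" unfolding dist_real_def by linarith
  then have D: "D > 0" "\<theta> D t < t + e/2"
    using d B_zero_le[OF B t] by (auto simp: D_def)
  have c2: "continuous_on {0..} (\<lambda>s. \<theta> D s)" using B_cont2[OF B] D by simp
  have "\<exists>d>0. \<forall>s\<in>{0..}. dist s t < d \<longrightarrow> dist (\<theta> D s) (\<theta> D t) < e/4"
    by (rule c2[unfolded continuous_on_iff, rule_format]) (use e t in auto)
  then obtain E' where E': "E' > 0" "\<forall>s\<in>{0..}. dist s t < E' \<longrightarrow> dist (\<theta> D s) (\<theta> D t) < e/4"
    by blast
  show ?thesis
  proof (intro exI conjI allI impI)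
    show "D > 0" by (rule D)
    show "min E' (e/4) > 0" using E' e by simp
    fix s :: real assume s: "0 \<le> s" "\<bar>s - t\<bar> < min E' (e/4)"
    then have "dist (\<theta> D s) (\<theta> D t) < e/4" using E' by (auto simp: dist_real_def)
    then have b: "\<theta> D s - \<theta> D t < e/4" unfolding dist_real_def by linarith
    have "\<bar>s - t\<bar> < e/4" using s(2) by simp
    then have c: "t - s < e/4" by linarith
    show "\<theta> D s < s + e" using D b c by linarith
  qed
qed

lemma B_unif:
  assumes B: "B_action \<theta>" and e: "e > 0"
  shows "\<exists>\<delta>>0. \<forall>t\<in>{0..1}. \<theta> \<delta> t < t + e"
proof -
  have "\<forall>t\<in>{0..1::real}. \<exists>p. fst p > 0 \<and> snd p > 0 \<and> (\<forall>s\<ge>0. \<bar>s - t\<bar> < snd p \<longrightarrow> \<theta> (fst p) s < s + e)"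
  proof
    fix t :: real assume "t \<in> {0..1}"
    then obtain D E where DE: "D > 0" "E > 0" "\<forall>s\<ge>0. \<bar>s - t\<bar> < E \<longrightarrow> \<theta> D s < s + e"
      using B_local[OF B e, of t] by auto
    show "\<exists>p. fst p > 0 \<and> snd p > 0 \<and> (\<forall>s\<ge>0. \<bar>s - t\<bar> < snd p \<longrightarrow> \<theta> (fst p) s < s + e)"
      using DE by (intro exI[of _ "(D, E)"]) simp
  qed
  then obtain P where P0: "\<forall>t\<in>{0..1::real}. fst (P t) > 0 \<and> snd (P t) > 0 \<and> (\<forall>s\<ge>0. \<bar>s - t\<bar> < snd (P t) \<longrightarrow> \<theta> (fst (P t)) s < s + e)"
    by (rule bchoice[THEN exE]) blast
  have P: "\<And>t. t \<in> {0..1::real} \<Longrightarrow> fst (P t) > 0 \<and> snd (P t) > 0 \<and> (\<forall>s\<ge>0. \<bar>s - t\<bar> < snd (P t) \<longrightarrow> \<theta> (fst (P t)) s < s + e)"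
    using P0 by blast
  have cov: "{0..1::real} \<subseteq> (\<Union>t\<in>{0..1}. ball t (snd (P t)))"
  proof
    fix x :: real assume "x \<in> {0..1}"
    then show "x \<in> (\<Union>t\<in>{0..1}. ball t (snd (P t)))" using P[of x] by (intro UN_I[of x]) auto
  qed
  obtain C where C: "C \<subseteq> {0..1}" "finite C" "{0..1::real} \<subseteq> (\<Union>t\<in>C. ball t (snd (P t)))"
    using compactE_image[OF compact_Icc _ cov] by blast
  have Cne: "C \<noteq> {}" using C(3) by auto
  define \<delta> where "\<delta> = Min ((\<lambda>t. fst (P t)) ` C)"
  have dpos: "\<delta> > 0" unfolding \<delta>_def using C Cne P by (subst Min_gr_iff) auto
  show ?thesis
  proof (intro exI conjI ballI)
    show "\<delta> > 0" by (rule dpos)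
    fix s :: real assume s: "s \<in> {0..1}"
    then obtain t where t: "t \<in> C" "s \<in> ball t (snd (P t))" using C(3) by blast
    have "\<delta> \<le> fst (P t)" unfolding \<delta>_def using C t by auto
    then have "\<theta> \<delta> s \<le> \<theta> (fst (P t)) s" using B_mono1[OF B] dpos s by auto
    also have "\<dots> < s + e" using P[of t] t C s by (auto simp: dist_real_def)
    finally show "\<theta> \<delta> s < s + e" .
  qed
qed

theorem mainTheorem6:
  fixes X :: "'a set" and \<theta> :: "real \<Rightarrow> real \<Rightarrow> real" and d :: "'a \<Rightarrow> 'a \<Rightarrow> real"
  assumes "X \<noteq> {}" and "B_action \<theta>" and "theta_metric X \<theta> d"
  shows "metrizable_space (theta_topology X d)"
proof -
  note B = assms(2)
  have dnn: "\<And>x y. x \<in> X \<Longrightarrow> y \<in> X \<Longrightarrow> 0 \<le> d x y"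
    and dz: "\<And>x y. x \<in> X \<Longrightarrow> y \<in> X \<Longrightarrow> d x y = 0 \<longleftrightarrow> x = y"
    and dsym: "\<And>x y. x \<in> X \<Longrightarrow> y \<in> X \<Longrightarrow> d x y = d y x"
    and dtri: "\<And>x y z. x \<in> X \<Longrightarrow> y \<in> X \<Longrightarrow> z \<in> X \<Longrightarrow> d x z \<le> \<theta> (d x y) (d y z)"
  proof -
    have T: "(\<forall>x\<in>X. \<forall>y\<in>X. d x y \<ge> 0) \<and>
     (\<forall>x\<in>X. \<forall>y\<in>X. d x y = 0 \<longleftrightarrow> x = y) \<and>
     (\<forall>x\<in>X. \<forall>y\<in>X. d x y = d y x) \<and>
     (\<forall>x\<in>X. \<forall>y\<in>X. \<forall>z\<in>X. d x z \<le> \<theta> (d x y) (d y z))"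
      using assms(3) unfolding theta_metric_def .
    then show "\<And>x y. x \<in> X \<Longrightarrow> y \<in> X \<Longrightarrow> 0 \<le> d x y"
      and "\<And>x y. x \<in> X \<Longrightarrow> y \<in> X \<Longrightarrow> d x y = 0 \<longleftrightarrow> x = y"
      and "\<And>x y. x \<in> X \<Longrightarrow> y \<in> X \<Longrightarrow> d x y = d y x"
      and "\<And>x y z. x \<in> X \<Longrightarrow> y \<in> X \<Longrightarrow> z \<in> X \<Longrightarrow> d x z \<le> \<theta> (d x y) (d y z)"
      by simp_all
  qed
  define f where "f x y z = \<bar>min (d x z) 1 - min (d y z) 1\<bar>" for x y z
  define \<rho> where "\<rho> x y = (if x \<in> X \<and> y \<in> X then (SUP z\<in>X. f x y z) else 0)" for x y
  have fb: "f x y z \<le> 1" if "x \<in> X" "y \<in> X" "z \<in> X" for x y z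
    using dnn[of x z] dnn[of y z] that unfolding f_def by auto
  have bdd: "bdd_above (f x y ` X)" if "x \<in> X" "y \<in> X" for x y
    using fb that by (intro bdd_aboveI[of _ 1]) auto
  have up: "f x y z \<le> \<rho> x y" if "x \<in> X" "y \<in> X" "z \<in> X" for x y z
    unfolding \<rho>_def using that bdd[OF that(1,2)] by (simp add: cSUP_upper)
  have least: "\<rho> x y \<le> c" if "x \<in> X" "y \<in> X" "\<And>z. z \<in> X \<Longrightarrow> f x y z \<le> c" for x y c
    unfolding \<rho>_def using that assms(1) by (simp add: cSUP_least)
  have fsym: "f x y z = f y x z" for x y z unfolding f_def by (simp add: abs_minus_commute)
  have ms: "Metric_space X \<rho>"
  proof
    fix x y
    show "0 \<le> \<rho> x y"
    proof (cases "x \<in> X \<and> y \<in> X")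
      case True
      then have "f x y x \<le> \<rho> x y" using up by blast
      then show ?thesis unfolding f_def by linarith
    qed (auto simp: \<rho>_def)
    show "\<rho> x y = \<rho> y x" unfolding \<rho>_def using fsym by auto
  next
    fix x y assume xy: "x \<in> X" "y \<in> X"
    show "\<rho> x y = 0 \<longleftrightarrow> x = y"
    proof
      assume "\<rho> x y = 0"
      then have "f x y y \<le> 0" using up[OF xy xy(2)] by simp
      then have "d x y \<le> 0" using dz[of y y] xy unfolding f_def by auto
      then show "x = y" using dnn[OF xy] dz[OF xy] by simp
    next
      assume "x = y"
      then have "\<rho> x y \<le> 0" using least[OF xy, of 0] unfolding f_def by simp
      moreover have "f x y x \<le> \<rho> x y" using up xy by blast
      moreover have "0 \<le> f x y x" unfolding f_def by simp
      ultimately show "\<rho> x y = 0" by linarith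
    qed
  next
    fix x y z assume xyz: "x \<in> X" "y \<in> X" "z \<in> X"
    show "\<rho> x z \<le> \<rho> x y + \<rho> y z"
    proof (rule least)
      fix w assume w: "w \<in> X"
      have "f x z w \<le> f x y w + f y z w" unfolding f_def by linarith
      also have "\<dots> \<le> \<rho> x y + \<rho> y z" using up xyz w by (meson add_mono)
      finally show "f x z w \<le> \<rho> x y + \<rho> y z" .
    qed (use xyz in auto)
  qed
  have lower: "min (d x y) 1 \<le> \<rho> x y" if "x \<in> X" "y \<in> X" for x y
    using up[OF that that(2)] dz[of y y] that dnn[OF that] unfolding f_def by auto
  have key: "min (d a z) 1 - min (d b z) 1 \<le> e"
    if ab: "a \<in> X" "b \<in> X" "z \<in> X" "d a b < \<delta>" "\<forall>t\<in>{0..1}. \<theta> \<delta> t < t + e" "e > 0"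
    for a b z \<delta> e
  proof (cases "d b z \<ge> 1")
    case True
    then show ?thesis using that by auto
  next
    case False
    have t: "d b z \<in> {0..1}" using False dnn[of b z] ab by auto
    have "d a z \<le> \<theta> (d a b) (d b z)" using dtri ab by blast
    also have "\<dots> \<le> \<theta> \<delta> (d b z)" using B_mono1[OF B, of "d a b" \<delta> "d b z"] dnn ab by auto
    also have "\<dots> < d b z + e" using ab(5) t by blast
    finally show ?thesis using False by auto
  qed
  have "theta_topology X d = Metric_space.mtopology X \<rho>"
    unfolding theta_topology_def Metric_space.mtopology_def[OF ms] Metric_space.mopen_def[OF ms]
      Metric_space.mball_def[OF ms]
  proof (rule arg_cong[where f=topology], rule ext, rule iffI)
    fix U assume U: "U \<subseteq> X \<and> (\<forall>x\<in>U. \<exists>r>0. {y \<in> X. d x y < r} \<subseteq> U)"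
    show "U \<subseteq> X \<and> (\<forall>x. x \<in> U \<longrightarrow> (\<exists>r>0. {y. x \<in> X \<and> y \<in> X \<and> \<rho> x y < r} \<subseteq> U))"
    proof (intro conjI allI impI)
      show "U \<subseteq> X" using U by blast
      fix x assume x: "x \<in> U"
      then obtain r where r: "r > 0" "{y \<in> X. d x y < r} \<subseteq> U" using U by blast
      show "\<exists>r>0. {y. x \<in> X \<and> y \<in> X \<and> \<rho> x y < r} \<subseteq> U"
      proof (intro exI conjI subsetI)
        show "min r 1 > 0" using r by simp
        fix y assume "y \<in> {y. x \<in> X \<and> y \<in> X \<and> \<rho> x y < min r 1}"
        then have y: "x \<in> X" "y \<in> X" "\<rho> x y < min r 1" by auto
        then have "min (d x y) 1 < min r 1" using lower[of x y] by linarith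
        then have "d x y < r" by (auto simp: min_def split: if_splits)
        then show "y \<in> U" using r y by blast
      qed
    qed
  next
    fix U assume U: "U \<subseteq> X \<and> (\<forall>x. x \<in> U \<longrightarrow> (\<exists>r>0. {y. x \<in> X \<and> y \<in> X \<and> \<rho> x y < r} \<subseteq> U))"
    show "U \<subseteq> X \<and> (\<forall>x\<in>U. \<exists>r>0. {y \<in> X. d x y < r} \<subseteq> U)"
    proof (intro conjI ballI)
      show "U \<subseteq> X" using U by blast
      fix x assume x: "x \<in> U"
      then have xX: "x \<in> X" using U by blast
      obtain r where r: "r > 0" "{y. x \<in> X \<and> y \<in> X \<and> \<rho> x y < r} \<subseteq> U" using U x by blast
      obtain \<delta> where dl: "\<delta> > 0" "\<forall>t\<in>{0..1}. \<theta> \<delta> t < t + r/2"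
        using B_unif[OF B, of "r/2"] r by auto
      show "\<exists>r>0. {y \<in> X. d x y < r} \<subseteq> U"
      proof (intro exI conjI subsetI)
        show "\<delta> > 0" by (rule dl)
        fix y assume "y \<in> {y \<in> X. d x y < \<delta>}"
        then have y: "y \<in> X" "d x y < \<delta>" by auto
        have "\<rho> x y \<le> r/2"
        proof (rule least[OF xX y(1)])
          fix z assume z: "z \<in> X"
          have 1: "min (d x z) 1 - min (d y z) 1 \<le> r/2"
            using key[OF xX y(1) z y(2) dl(2)] r by simp
          have 2: "min (d y z) 1 - min (d x z) 1 \<le> r/2"
            using key[OF y(1) xX z _ dl(2)] y dsym[OF xX y(1)] r by simp
          show "f x y z \<le> r/2" unfolding f_def using 1 2 by linarith
        qed
        then show "y \<in> U" using r xX y by auto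
      qed
    qed
  qed
  then show ?thesis unfolding metrizable_space_def using ms by blast
qed

end
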